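(* For each $n$ let $N_n=(N_{n,1},\ldots,N_{n,M_n})$ be multinomially distributed with parameters $(n,p_{n,1},\ldots,p_{n,M_n})$, where $\liminf_{n\to\infty}n\min_m p_{n,m}>0$. If $\alpha_{n,m}$ are real numbers with $\sum_m|\alpha_{n,m}|=O(1)$ and $\max_m|\alpha_{n,m}|\to0$ as $n\to\infty$, then $$\sum_m\alpha_{n,m}\Big(\frac{N_{n,m}(N_{n,m}-1)}{n(n-1)p_{n,m}^2}-1\Big)\to0\quad\text{in probability}.$$ *)

theory Defs
  imports "HOL-Probability.Probability" "HOL-Library.Landau_Symbols"
begin

text \<open>Categorical distribution on the categories {0..<M} with probabilities p 0, ..., p (M-1).
  (Meaningful when p m \<ge> 0 for m < M and the p m sum to 1.)\<close>
definition categorical_pmf :: "nat \<Rightarrow> (nat \<Rightarrow> real) \<Rightarrow> nat pmf" where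
  "categorical_pmf M p = embed_pmf (\<lambda>m. if m < M then p m else 0)"

text \<open>Count vectors are represented as functions nat \<Rightarrow> nat (zero outside {0..<M}).\<close>
primrec multinomial_pmf :: "nat \<Rightarrow> nat \<Rightarrow> (nat \<Rightarrow> real) \<Rightarrow> (nat \<Rightarrow> nat) pmf" where
  "multinomial_pmf 0 M p = return_pmf (\<lambda>_. 0)"
| "multinomial_pmf (Suc k) M p =
     bind_pmf (multinomial_pmf k M p)
       (\<lambda>N. map_pmf (\<lambda>m. N(m := Suc (N m))) (categorical_pmf M p))"

end

theory Submission imports Defs begin

lemma integral_bind_pmf_fin:
  fixes f :: "'b \<Rightarrow> real"
  assumes fin: "finite (set_pmf (bind_pmf A B))"
  shows "integral\<^sup>L (bind_pmf A B) f = (\<integral>x. integral\<^sup>L (B x) f \<partial>A)"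
proof -
  define S where "S = set_pmf (bind_pmf A B)"
  define g where "g = (\<lambda>x. if x \<in> S then f x else 0)"
  have "integral\<^sup>L (bind_pmf A B) f = integral\<^sup>L (bind_pmf A B) g"
    by (intro integral_cong_AE) (auto simp: AE_measure_pmf_iff g_def S_def)
  also have "\<dots> = integral\<^sup>L (measure_pmf A \<bind> (\<lambda>x. measure_pmf (B x))) g"
    by (simp add: measure_pmf_bind)
  also have "\<dots> = (\<integral>x. integral\<^sup>L (B x) g \<partial>A)"
  proof (rule integral_bind[where K="count_space UNIV" and B="\<Sum>y\<in>S. \<bar>f y\<bar>" and B'=1])
    show "g \<in> borel_measurable (count_space UNIV)" by simp
    show "\<bar>g x\<bar> \<le> (\<Sum>y\<in>S. \<bar>f y\<bar>)" for x
      using fin unfolding g_def S_def[symmetric]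
      by (auto intro: member_le_sum[where f="\<lambda>y. \<bar>f y\<bar>"])
    show "(\<lambda>x. measure_pmf (B x)) \<in> measurable (measure_pmf A) (subprob_algebra (count_space UNIV))"
      by (simp add: measure_pmf_in_subprob_algebra)
    show "finite_measure (measure_pmf A)" by (rule measure_pmf.finite_measure_axioms)
    show "AE x in measure_pmf A. emeasure (measure_pmf (B x)) (space (measure_pmf (B x))) \<le> ennreal 1"
      by (simp add: measure_pmf.emeasure_space_1)
  qed
  also have "\<dots> = (\<integral>x. integral\<^sup>L (B x) f \<partial>A)"
    by (intro integral_cong_AE) (auto simp: AE_measure_pmf_iff g_def S_def intro!: integral_cong_AE)
  finally show ?thesis .
qed


lemma pmf_categorical:
  assumes nn: "\<And>m. m < M \<Longrightarrow> p m \<ge> 0" and s: "(\<Sum>m<M. p m) = 1"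
  shows "pmf (categorical_pmf M p) m = (if m < M then p m else 0)"
  unfolding categorical_pmf_def
proof (rule pmf_embed_pmf)
  show "0 \<le> (if x < M then p x else 0)" for x using nn by auto
  have "(\<integral>\<^sup>+ x. ennreal (if x < M then p x else 0) \<partial>count_space UNIV)
       = (\<Sum>x<M. ennreal (if x < M then p x else 0))"
    by (rule nn_integral_count_space') auto
  also have "\<dots> = ennreal (\<Sum>x<M. p x)"
    using nn by (subst sum_ennreal) auto
  finally show "(\<integral>\<^sup>+ x. ennreal (if x < M then p x else 0) \<partial>count_space UNIV) = 1"
    using s by simp
qed

lemma set_categorical:
  assumes nn: "\<And>m. m < M \<Longrightarrow> p m \<ge> 0" and s: "(\<Sum>m<M. p m) = 1"
  shows "set_pmf (categorical_pmf M p) \<subseteq> {..<M}"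
  using pmf_categorical[OF nn s] by (auto simp: set_pmf_eq)

lemma integral_categorical:
  fixes h :: "nat \<Rightarrow> real"
  assumes nn: "\<And>m. m < M \<Longrightarrow> p m \<ge> 0" and s: "(\<Sum>m<M. p m) = 1"
  shows "integral\<^sup>L (categorical_pmf M p) h = (\<Sum>m<M. p m * h m)"
  by (subst integral_measure_pmf[where A="{..<M}"])
     (use set_categorical[OF nn s] pmf_categorical[OF nn s] in auto)

lemma finite_multinomial:
  assumes nn: "\<And>m. m < M \<Longrightarrow> p m \<ge> 0" and s: "(\<Sum>m<M. p m) = 1"
  shows "finite (set_pmf (multinomial_pmf n M p))"
proof (induction n)
  case 0 then show ?case by simp
next
  case (Suc n)
  have "finite (set_pmf (categorical_pmf M p))"
    using set_categorical[OF nn s] finite_subset by blast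
  then show ?case using Suc by (simp add: set_bind_pmf)
qed

lemma integral_multinomial_Suc:
  fixes f :: "(nat \<Rightarrow> nat) \<Rightarrow> real"
  assumes nn: "\<And>m. m < M \<Longrightarrow> p m \<ge> 0" and s: "(\<Sum>m<M. p m) = 1"
  shows "integral\<^sup>L (multinomial_pmf (Suc n) M p) f =
     (\<integral>N. (\<Sum>j<M. p j * f (N(j := Suc (N j)))) \<partial>multinomial_pmf n M p)"
proof -
  have fin: "finite (set_pmf (multinomial_pmf (Suc n) M p))"
    by (rule finite_multinomial) (use nn s in auto)
  show ?thesis
    using integral_bind_pmf_fin[OF fin[unfolded multinomial_pmf.simps], of f]
    by (simp add: integral_categorical[OF nn s])
qed


definition ff :: "real \<Rightarrow> nat \<Rightarrow> real" where "ff x j = (\<Prod>i<j. x - real i)"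

lemma ff_0[simp]: "ff x 0 = 1" by (simp add: ff_def)
lemma ff_Suc: "ff x (Suc j) = ff x j * (x - real j)" by (simp add: ff_def)
lemma ff_shift: "ff (x + 1) (Suc j) = (x + 1) * ff x j"
  unfolding ff_def by (subst prod.lessThan_Suc_shift) (simp add: algebra_simps)
lemma ff_diff: "ff (x + 1) j - ff x j = real j * ff x (j - 1)"
proof (cases j)
  case (Suc i)
  have "ff (x + 1) (Suc i) = (x + 1) * ff x i" by (rule ff_shift)
  moreover have "ff x (Suc i) = ff x i * (x - real i)" by (rule ff_Suc)
  ultimately show ?thesis using Suc by (simp add: algebra_simps)
qed simp
lemma ff_zero: "j > 0 \<Longrightarrow> ff 0 j = 0"
  unfolding ff_def by (rule prod_zero) (auto intro: bexI[of _ 0])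

lemma moment:
  assumes nn: "\<And>m. m < M \<Longrightarrow> p m \<ge> 0" and s: "(\<Sum>m<M. p m) = 1" and mk: "m \<noteq> k"
  defines "q \<equiv> (\<lambda>i. if i < M then p i else 0)"
  shows "integral\<^sup>L (multinomial_pmf n M p) (\<lambda>N. ff (N m) a * ff (N k) b)
         = ff (real n) (a + b) * q m ^ a * q k ^ b"
proof (induction n arbitrary: a b)
  case 0
  then show ?case by (cases a; cases b) (auto simp: ff_zero)
next
  case (Suc n)
  let ?g = "\<lambda>N::nat\<Rightarrow>nat. ff (N m) a * ff (N k) b"
  let ?h1 = "\<lambda>N::nat\<Rightarrow>nat. ff (N m) (a - 1) * ff (N k) b"
  let ?h2 = "\<lambda>N::nat\<Rightarrow>nat. ff (N m) a * ff (N k) (b - 1)"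
  have fin: "finite (set_pmf (multinomial_pmf n M p))"
    by (rule finite_multinomial) (use nn s in auto)
  have pt: "p j * ?g (N(j := Suc (N j))) = p j * ?g N
      + (if j = m then p j * (real a * ?h1 N) else 0)
      + (if j = k then p j * (real b * ?h2 N) else 0)" for N j
  proof -
    have dm: "ff (real (N m) + 1) a = ff (N m) a + real a * ff (N m) (a - 1)"
      using ff_diff[of "real (N m)" a] by simp
    have dk: "ff (real (N k) + 1) b = ff (N k) b + real b * ff (N k) (b - 1)"
      using ff_diff[of "real (N k)" b] by simp
    show ?thesis
      using mk dm dk by (auto simp: algebra_simps)
  qed
  have sumeq: "(\<Sum>j<M. p j * ?g (N(j := Suc (N j)))) =
      ?g N + q m * (real a * ?h1 N) + q k * (real b * ?h2 N)" for N
    by (simp only: pt sum.distrib flip: sum_distrib_right)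
       (simp add: s q_def sum.delta)
  have "integral\<^sup>L (multinomial_pmf (Suc n) M p) ?g
      = (\<integral>N. ?g N + q m * (real a * ?h1 N) + q k * (real b * ?h2 N) \<partial>multinomial_pmf n M p)"
    by (simp only: integral_multinomial_Suc[OF nn s] sumeq)
  also have "\<dots> = integral\<^sup>L (multinomial_pmf n M p) ?g
      + q m * (real a * integral\<^sup>L (multinomial_pmf n M p) ?h1)
      + q k * (real b * integral\<^sup>L (multinomial_pmf n M p) ?h2)"
    by (simp add: integrable_measure_pmf_finite[OF fin])
  also have "\<dots> = ff (real n) (a + b) * q m ^ a * q k ^ b
      + q m * (real a * (ff (real n) (a - 1 + b) * q m ^ (a - 1) * q k ^ b))
      + q k * (real b * (ff (real n) (a + (b - 1)) * q m ^ a * q k ^ (b - 1)))"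
    by (simp only: Suc.IH)
  also have "\<dots> = (ff (real n) (a + b) + real (a + b) * ff (real n) (a + b - 1)) * q m ^ a * q k ^ b"
  proof -
    have 1: "q m * (real a * (ff (real n) (a - 1 + b) * q m ^ (a - 1) * q k ^ b))
           = real a * ff (real n) (a + b - 1) * q m ^ a * q k ^ b"
      by (cases a) (auto simp: algebra_simps)
    have 2: "q k * (real b * (ff (real n) (a + (b - 1)) * q m ^ a * q k ^ (b - 1)))
           = real b * ff (real n) (a + b - 1) * q m ^ a * q k ^ b"
      by (cases b) (auto simp: algebra_simps)
    show ?thesis by (simp only: 1 2) (simp add: algebra_simps)
  qed
  also have "\<dots> = ff (real (Suc n)) (a + b) * q m ^ a * q k ^ b"
    using ff_diff[of "real n" "a + b"] by (simp add: algebra_simps)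
  finally show ?case .
qed


lemma ff_2: "ff x 2 = x * (x - 1)" by (simp add: ff_def numeral_eq_Suc)
lemma ff_3: "ff x 3 = x * (x - 1) * (x - 2)" by (simp add: ff_def numeral_eq_Suc)
lemma ff_4: "ff x 4 = x * (x - 1) * (x - 2) * (x - 3)" by (simp add: ff_def numeral_eq_Suc)

lemma moments1:
  fixes n :: nat
  assumes nn: "\<And>m. m < M \<Longrightarrow> p m \<ge> 0" and s: "(\<Sum>m<M. p m) = 1"
    and m: "m < M"
  shows "integral\<^sup>L (multinomial_pmf n M p) (\<lambda>N. real (N m) * (real (N m) - 1))
           = real n * (real n - 1) * p m ^ 2"
    and "integral\<^sup>L (multinomial_pmf n M p) (\<lambda>N. (real (N m) * (real (N m) - 1))\<^sup>2)
           = real n * (real n - 1) * (real n - 2) * (real n - 3) * p m ^ 4 + 4 * (real n * (real n - 1) * (real n - 2)) * p m ^ 3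
             + 2 * (real n * (real n - 1)) * p m ^ 2"
proof -
  have fin: "finite (set_pmf (multinomial_pmf n M p))"
    by (rule finite_multinomial) (use nn s in auto)
  have mM: "m \<noteq> M" using m by simp
  have single: "integral\<^sup>L (multinomial_pmf n M p) (\<lambda>N. ff (N m) a) = ff (real n) a * p m ^ a" for a
    using moment[OF nn s mM, of n a 0] m by simp
  show "integral\<^sup>L (multinomial_pmf n M p) (\<lambda>N. real (N m) * (real (N m) - 1))
           = real n * (real n - 1) * p m ^ 2"
    using single[of 2] by (simp add: ff_2)
  have sq: "(real (N m) * (real (N m) - 1))\<^sup>2 = ff (N m) 4 + 4 * ff (N m) 3 + 2 * ff (N m) 2" for N :: "nat \<Rightarrow> nat"
    by (simp add: ff_2 ff_3 ff_4 power2_eq_square algebra_simps)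
  have "integral\<^sup>L (multinomial_pmf n M p) (\<lambda>N. ff (N m) 4 + 4 * ff (N m) 3 + 2 * ff (N m) 2)
      = integral\<^sup>L (multinomial_pmf n M p) (\<lambda>N. ff (N m) 4) + 4 * integral\<^sup>L (multinomial_pmf n M p) (\<lambda>N. ff (N m) 3)
        + 2 * integral\<^sup>L (multinomial_pmf n M p) (\<lambda>N. ff (N m) 2)"
    by (simp add: integrable_measure_pmf_finite[OF fin])
  then show "integral\<^sup>L (multinomial_pmf n M p) (\<lambda>N. (real (N m) * (real (N m) - 1))\<^sup>2)
           = real n * (real n - 1) * (real n - 2) * (real n - 3) * p m ^ 4 + 4 * (real n * (real n - 1) * (real n - 2)) * p m ^ 3
             + 2 * (real n * (real n - 1)) * p m ^ 2"
    by (simp only: sq single) (simp add: ff_2 ff_3 ff_4)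
qed

lemma moments2:
  fixes n :: nat
  assumes nn: "\<And>m. m < M \<Longrightarrow> p m \<ge> 0" and s: "(\<Sum>m<M. p m) = 1"
    and m: "m < M" and k: "k < M" and mk: "m \<noteq> k"
  shows "integral\<^sup>L (multinomial_pmf n M p) (\<lambda>N. (real (N m) * (real (N m) - 1)) * (real (N k) * (real (N k) - 1)))
           = real n * (real n - 1) * (real n - 2) * (real n - 3) * p m ^ 2 * p k ^ 2"
  using moment[OF nn s mk, of n 2 2] m k by (simp add: ff_2 ff_4)

lemma second_moment:
  fixes n :: nat and \<alpha> :: "nat \<Rightarrow> real"
  assumes nn: "\<And>m. m < M \<Longrightarrow> p m \<ge> 0" and s: "(\<Sum>m<M. p m) = 1"
    and n2: "n \<ge> 2" and pos: "\<And>m. m < M \<Longrightarrow> p m > 0"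
  defines "x \<equiv> real n"
  defines "Y \<equiv> (\<lambda>m (N::nat\<Rightarrow>nat). real (N m) * (real (N m) - 1) / (x * (x - 1) * (p m)\<^sup>2) - 1)"
  defines "r \<equiv> x * (x - 1) * (x - 2) * (x - 3) / (x * (x - 1))\<^sup>2 - 1"
  defines "d \<equiv> (\<lambda>m. 4 * (x - 2) / (x * (x - 1) * p m) + 2 / (x * (x - 1) * (p m)\<^sup>2))"
  shows "integral\<^sup>L (multinomial_pmf n M p) (\<lambda>N. (\<Sum>m<M. \<alpha> m * Y m N)\<^sup>2)
         = r * (\<Sum>m<M. \<alpha> m)\<^sup>2 + (\<Sum>m<M. (\<alpha> m)\<^sup>2 * d m)"
proof -
  have fin: "finite (set_pmf (multinomial_pmf n M p))"
    by (rule finite_multinomial) (use nn s in auto)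
  note int = integrable_measure_pmf_finite[OF fin]
  have x2: "x \<ge> 2" using n2 unfolding x_def by simp
  have xx: "x * (x - 1) > 0" using x2 by simp
  have EY: "integral\<^sup>L (multinomial_pmf n M p) (\<lambda>N. Y m N * Y k N) = r + (if m = k then d m else 0)"
    if m: "m < M" and k: "k < M" for m k
  proof (cases "m = k")
    case True
    have pm: "p m > 0" using pos m by auto
    let ?c = "x * (x - 1) * (p m)\<^sup>2"
    have c0: "?c > 0" using pm xx by simp
    have "(\<lambda>N. Y m N * Y k N) = (\<lambda>N. (real (N m) * (real (N m) - 1))\<^sup>2 / ?c\<^sup>2
              - 2 * (real (N m) * (real (N m) - 1)) / ?c + 1)"
    proof
      fix N :: "nat \<Rightarrow> nat"
      have g: "(a / c - 1) * (a / c - 1) = a\<^sup>2 / c\<^sup>2 - 2 * a / c + 1" if "c \<noteq> 0" for a c :: real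
        using that by (simp add: power2_eq_square field_simps)
      show "Y m N * Y k N = (real (N m) * (real (N m) - 1))\<^sup>2 / ?c\<^sup>2
              - 2 * (real (N m) * (real (N m) - 1)) / ?c + 1"
        unfolding Y_def True by (rule g) (use c0 True in auto)
    qed
    then have "integral\<^sup>L (multinomial_pmf n M p) (\<lambda>N. Y m N * Y k N)
      = integral\<^sup>L (multinomial_pmf n M p) (\<lambda>N. (real (N m) * (real (N m) - 1))\<^sup>2) / ?c\<^sup>2
        - 2 * integral\<^sup>L (multinomial_pmf n M p) (\<lambda>N. real (N m) * (real (N m) - 1)) / ?c + 1"
      by (simp add: int)
    also have "\<dots> = r + d m"
    proof -
      have x0: "x \<noteq> 0" "x - 1 \<noteq> 0" using x2 by auto
      have p0: "p m \<noteq> 0" using pm by auto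
      have E1: "integral\<^sup>L (multinomial_pmf n M p) (\<lambda>N. real (N m) * (real (N m) - 1)) = x * (x - 1) * (p m)\<^sup>2"
        using moments1(1)[OF nn s m, of n] unfolding x_def by simp
      have E2: "integral\<^sup>L (multinomial_pmf n M p) (\<lambda>N. (real (N m) * (real (N m) - 1))\<^sup>2)
        = x * (x - 1) * (x - 2) * (x - 3) * p m ^ 4 + 4 * (x * (x - 1) * (x - 2)) * p m ^ 3 + 2 * (x * (x - 1)) * (p m)\<^sup>2"
        using moments1(2)[OF nn s m, of n] unfolding x_def by simp
      have A: "x * (x - 1) * (x - 2) * (x - 3) * p m ^ 4 / ?c\<^sup>2 = x * (x - 1) * (x - 2) * (x - 3) / (x * (x - 1))\<^sup>2"
      proof -
        have "?c\<^sup>2 = (x * (x - 1))\<^sup>2 * p m ^ 4"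
          by (simp add: power_mult_distrib flip: power_mult)
        moreover have "p m ^ 4 \<noteq> 0" using p0 by simp
        ultimately show ?thesis by simp
      qed
      have B: "4 * (x * (x - 1) * (x - 2)) * p m ^ 3 / ?c\<^sup>2 = 4 * (x - 2) / (x * (x - 1) * p m)"
      proof -
        let ?K = "x * (x - 1) * p m ^ 3"
        have "?c\<^sup>2 = (x * (x - 1) * p m) * ?K"
          by (simp add: power2_eq_square power3_eq_cube algebra_simps)
        moreover have "4 * (x * (x - 1) * (x - 2)) * p m ^ 3 = (4 * (x - 2)) * ?K"
          by (simp add: algebra_simps)
        moreover have "?K \<noteq> 0" using p0 x0 by simp
        ultimately show ?thesis by simp
      qed
      have C: "2 * (x * (x - 1)) * (p m)\<^sup>2 / ?c\<^sup>2 = 2 / (x * (x - 1) * (p m)\<^sup>2)"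
      proof -
        have "2 * (x * (x - 1)) * (p m)\<^sup>2 / ?c\<^sup>2 = (2 * ?c) / (?c * ?c)"
          by (simp add: power2_eq_square algebra_simps)
        also have "\<dots> = 2 / ?c" using x0 p0 by simp
        finally show ?thesis .
      qed
      have D: "2 * (x * (x - 1) * (p m)\<^sup>2) / ?c = 2"
        using x0 p0 by simp
      show ?thesis
        unfolding E1 E2 r_def d_def add_divide_distrib A B C D by simp
    qed
    finally show ?thesis using True by simp
  next
    case False
    have pm: "p m > 0" using pos m by auto
    have pk: "p k > 0" using pos k by auto
    let ?c = "x * (x - 1) * (p m)\<^sup>2"
    let ?e = "x * (x - 1) * (p k)\<^sup>2"
    have "(\<lambda>N. Y m N * Y k N) = (\<lambda>N. (real (N m) * (real (N m) - 1)) * (real (N k) * (real (N k) - 1))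
              / (?c * ?e) - real (N m) * (real (N m) - 1) / ?c - real (N k) * (real (N k) - 1) / ?e + 1)"
      unfolding Y_def by (auto simp: algebra_simps)
    then have "integral\<^sup>L (multinomial_pmf n M p) (\<lambda>N. Y m N * Y k N)
      = integral\<^sup>L (multinomial_pmf n M p) (\<lambda>N. (real (N m) * (real (N m) - 1)) * (real (N k) * (real (N k) - 1))) / (?c * ?e)
        - integral\<^sup>L (multinomial_pmf n M p) (\<lambda>N. real (N m) * (real (N m) - 1)) / ?c
        - integral\<^sup>L (multinomial_pmf n M p) (\<lambda>N. real (N k) * (real (N k) - 1)) / ?e + 1"
      by (simp add: int)
    also have "\<dots> = r"
    proof -
      have x0: "x \<noteq> 0" "x - 1 \<noteq> 0" using x2 by auto
      have p0: "p m \<noteq> 0" "p k \<noteq> 0" using pm pk by auto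
      have E1: "integral\<^sup>L (multinomial_pmf n M p) (\<lambda>N. real (N m) * (real (N m) - 1)) = ?c"
        using moments1(1)[OF nn s m, of n] unfolding x_def by simp
      have E1': "integral\<^sup>L (multinomial_pmf n M p) (\<lambda>N. real (N k) * (real (N k) - 1)) = ?e"
        using moments1(1)[OF nn s k, of n] unfolding x_def by simp
      have E2: "integral\<^sup>L (multinomial_pmf n M p) (\<lambda>N. (real (N m) * (real (N m) - 1)) * (real (N k) * (real (N k) - 1)))
          = (x * (x - 1) * (x - 2) * (x - 3)) * ((p m)\<^sup>2 * (p k)\<^sup>2)"
        using moments2[OF nn s m k False, of n] unfolding x_def by simp
      have ce: "?c * ?e = (x * (x - 1))\<^sup>2 * ((p m)\<^sup>2 * (p k)\<^sup>2)"
        by (simp add: power2_eq_square algebra_simps)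
      have nz: "(p m)\<^sup>2 * (p k)\<^sup>2 \<noteq> 0" using p0 by simp
      have c0: "?c \<noteq> 0" "?e \<noteq> 0" using x0 p0 by auto
      show ?thesis
        unfolding E1 E1' E2 ce r_def using nz c0 by simp
    qed
    finally show ?thesis using False by simp
  qed
  have "(\<lambda>N. (\<Sum>m<M. \<alpha> m * Y m N)\<^sup>2) = (\<lambda>N. \<Sum>m<M. \<Sum>k<M. \<alpha> m * \<alpha> k * (Y m N * Y k N))"
    by (auto simp: power2_eq_square sum_product algebra_simps)
  then have "integral\<^sup>L (multinomial_pmf n M p) (\<lambda>N. (\<Sum>m<M. \<alpha> m * Y m N)\<^sup>2)
     = (\<Sum>m<M. \<Sum>k<M. \<alpha> m * \<alpha> k * integral\<^sup>L (multinomial_pmf n M p) (\<lambda>N. Y m N * Y k N))"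
    by (simp add: int)
  also have "\<dots> = (\<Sum>m<M. \<Sum>k<M. \<alpha> m * \<alpha> k * (r + (if m = k then d m else 0)))"
    by (intro sum.cong refl) (simp add: EY)
  also have "\<dots> = (\<Sum>m<M. \<Sum>k<M. r * (\<alpha> m * \<alpha> k)) + (\<Sum>m<M. (\<alpha> m)\<^sup>2 * d m)"
  proof -
    have "(\<Sum>m<M. \<Sum>k<M. \<alpha> m * \<alpha> k * (r + (if m = k then d m else 0)))
       = (\<Sum>m<M. \<Sum>k<M. r * (\<alpha> m * \<alpha> k) + (if k = m then (\<alpha> m)\<^sup>2 * d m else 0))"
      by (intro sum.cong refl) (auto simp: power2_eq_square algebra_simps)
    also have "\<dots> = (\<Sum>m<M. \<Sum>k<M. r * (\<alpha> m * \<alpha> k)) + (\<Sum>m<M. (\<alpha> m)\<^sup>2 * d m)"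
      by (simp add: sum.distrib sum.delta)
    finally show ?thesis .
  qed
  also have "\<dots> = r * (\<Sum>m<M. \<alpha> m)\<^sup>2 + (\<Sum>m<M. (\<alpha> m)\<^sup>2 * d m)"
    by (simp add: power2_eq_square sum_product flip: sum_distrib_left)
  finally show ?thesis .
qed

lemma r_nonpos: assumes "(x::real) \<ge> 2" shows "x * (x - 1) * (x - 2) * (x - 3) / (x * (x - 1))\<^sup>2 - 1 \<le> 0"
proof -
  have D: "x * (x - 1) > 0" using assms by simp
  have "(x - 2) * (x - 3) \<le> x * (x - 1)" using assms by (simp add: algebra_simps)
  then have "x * (x - 1) * ((x - 2) * (x - 3)) \<le> x * (x - 1) * (x * (x - 1))"
    using D by (intro mult_left_mono) auto
  then have "x * (x - 1) * (x - 2) * (x - 3) \<le> (x * (x - 1))\<^sup>2"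
    by (simp add: power2_eq_square mult.assoc)
  moreover have "(x * (x - 1))\<^sup>2 > 0" using D by (intro zero_less_power) auto
  ultimately have "x * (x - 1) * (x - 2) * (x - 3) / (x * (x - 1))\<^sup>2 \<le> 1"
    by (subst pos_divide_le_eq) auto
  then show ?thesis by simp
qed
lemma d_bound1: assumes "(x::real) \<ge> 2" "p > 0" "x * p \<ge> c" "c > 0"
  shows "4 * (x - 2) / (x * (x - 1) * p) \<le> 4 / c"
proof -
  have pos: "x * (x - 1) * p > 0" using assms by simp
  have "4 * (x - 2) / (x * (x - 1) * p) \<le> 4 * (x - 1) / (x * (x - 1) * p)"
    using pos assms by (intro divide_right_mono) auto
  also have "\<dots> = 4 / (x * p)" using assms by (simp add: field_simps)
  also have "\<dots> \<le> 4 / c" using assms by (intro frac_le) auto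
  finally show ?thesis .
qed
lemma d_bound2: assumes "(x::real) \<ge> 2" "p > 0" "x * p \<ge> c" "c > 0"
  shows "2 / (x * (x - 1) * p\<^sup>2) \<le> 4 / c\<^sup>2"
proof -
  have "c\<^sup>2 \<le> (x * p)\<^sup>2" using assms by (intro power_mono) auto
  also have "\<dots> = x * x * p\<^sup>2" by (simp add: power2_eq_square)
  also have "\<dots> \<le> 2 * (x * (x - 1)) * p\<^sup>2" using assms
    by (intro mult_right_mono) (auto simp: algebra_simps)
  finally have h: "c\<^sup>2 / 2 \<le> x * (x - 1) * p\<^sup>2" by simp
  have "2 / (x * (x - 1) * p\<^sup>2) \<le> 2 / (c\<^sup>2 / 2)"
    using h assms by (intro frac_le) auto
  also have "\<dots> = 4 / c\<^sup>2" by simp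
  finally show ?thesis .
qed

theorem corollary3:
  fixes M :: "nat \<Rightarrow> nat"
    and p :: "nat \<Rightarrow> nat \<Rightarrow> real"
    and \<alpha> :: "nat \<Rightarrow> nat \<Rightarrow> real"
  assumes p_nonneg: "\<And>n m. m < M n \<Longrightarrow> p n m \<ge> 0"
    and p_sum: "\<And>n. (\<Sum>m<M n. p n m) = 1"
    and p_min: "liminf (\<lambda>n. ereal (real n * Min (p n ` {..<M n}))) > 0"
    and alpha_sum: "(\<lambda>n. \<Sum>m<M n. \<bar>\<alpha> n m\<bar>) \<in> O(\<lambda>_. 1)"
    and alpha_max: "(\<lambda>n. Max ((\<lambda>m. \<bar>\<alpha> n m\<bar>) ` {..<M n})) \<longlonglongrightarrow> 0"
  shows "\<forall>\<epsilon>>0. (\<lambda>n. measure_pmf.prob (multinomial_pmf n (M n) (p n))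
            {N. \<bar>\<Sum>m<M n. \<alpha> n m *
                 (real (N m) * (real (N m) - 1) / (real n * (real n - 1) * (p n m)\<^sup>2) - 1)\<bar> > \<epsilon>})
          \<longlonglongrightarrow> 0"
proof (intro allI impI)
  fix \<epsilon> :: real assume \<epsilon>: "\<epsilon> > 0"
  obtain z where z0: "0 < ereal z" and zl: "ereal z < liminf (\<lambda>n. ereal (real n * Min (p n ` {..<M n})))"
    using ereal_dense2[OF p_min] by blast
  have z: "z > 0" using z0 by simp
  have ev1: "eventually (\<lambda>n. z < real n * Min (p n ` {..<M n})) sequentially"
    using less_LiminfD[OF zl] by simp
  obtain B where B0: "B > 0" and evB: "eventually (\<lambda>n. \<bar>\<Sum>m<M n. \<bar>\<alpha> n m\<bar>\<bar> \<le> B) sequentially"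
    using alpha_sum by (elim landau_o.bigE) auto
  define K where "K = 4 / z + 4 / z\<^sup>2"
  define u where "u n = Max ((\<lambda>m. \<bar>\<alpha> n m\<bar>) ` {..<M n}) * (K * B / \<epsilon>\<^sup>2)" for n
  have u0: "u \<longlonglongrightarrow> 0"
    unfolding u_def by (rule tendsto_mult_left_zero[OF alpha_max])
  let ?P = "\<lambda>n. measure_pmf.prob (multinomial_pmf n (M n) (p n))
            {N. \<bar>\<Sum>m<M n. \<alpha> n m *
                 (real (N m) * (real (N m) - 1) / (real n * (real n - 1) * (p n m)\<^sup>2) - 1)\<bar> > \<epsilon>}"
  have "eventually (\<lambda>n. ?P n \<le> u n) sequentially"
    using ev1 evB eventually_ge_at_top[of 2]
  proof eventually_elim
    case (elim n)
    then have hmin: "z < real n * Min (p n ` {..<M n})" and hB: "\<bar>\<Sum>m<M n. \<bar>\<alpha> n m\<bar>\<bar> \<le> B"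
      and n2: "n \<ge> 2" by auto
    have M0: "M n \<noteq> 0"
    proof
      assume "M n = 0" then show False using p_sum[of n] by simp
    qed
    have xp: "z \<le> real n * p n m" if m: "m < M n" for m
    proof -
      have "Min (p n ` {..<M n}) \<le> p n m" using m by (intro Min_le) auto
      then have "real n * Min (p n ` {..<M n}) \<le> real n * p n m" by (intro mult_left_mono) auto
      then show ?thesis using hmin by simp
    qed
    have pos: "p n m > 0" if m: "m < M n" for m
    proof -
      have "real n * p n m > 0" using xp[OF m] z by simp
      then show ?thesis using zero_less_mult_pos by (metis of_nat_0_le_iff order_le_less mult_eq_0_iff less_irrefl)
    qed
    define S where "S N = (\<Sum>m<M n. \<alpha> n m *
                 (real (N m) * (real (N m) - 1) / (real n * (real n - 1) * (p n m)\<^sup>2) - 1))" for N :: "nat \<Rightarrow> nat"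
    define r where "r = real n * (real n - 1) * (real n - 2) * (real n - 3) / (real n * (real n - 1))\<^sup>2 - 1"
    define d where "d m = 4 * (real n - 2) / (real n * (real n - 1) * p n m) + 2 / (real n * (real n - 1) * (p n m)\<^sup>2)" for m
    have fin: "finite (set_pmf (multinomial_pmf n (M n) (p n)))"
      by (rule finite_multinomial) (use p_nonneg p_sum in auto)
    have E: "integral\<^sup>L (multinomial_pmf n (M n) (p n)) (\<lambda>N. (S N)\<^sup>2) = r * (\<Sum>m<M n. \<alpha> n m)\<^sup>2 + (\<Sum>m<M n. (\<alpha> n m)\<^sup>2 * d m)"
      unfolding S_def r_def d_def
      by (rule second_moment) (use p_nonneg p_sum n2 pos in auto)
    have r0: "r \<le> 0" unfolding r_def by (rule r_nonpos) (use n2 in simp)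
    have dK: "d m \<le> K" if m: "m < M n" for m
      unfolding d_def K_def
      using d_bound1[of "real n" "p n m" z] d_bound2[of "real n" "p n m" z] n2 pos[OF m] xp[OF m] z
      by (intro add_mono) auto
    have amax: "\<bar>\<alpha> n m\<bar> \<le> Max ((\<lambda>m. \<bar>\<alpha> n m\<bar>) ` {..<M n})" if m: "m < M n" for m
      using m by (intro Max_ge) auto
    have amax0: "0 \<le> Max ((\<lambda>m. \<bar>\<alpha> n m\<bar>) ` {..<M n})"
    proof -
      have "0 < M n" using M0 by simp
      then have "\<bar>\<alpha> n 0\<bar> \<le> Max ((\<lambda>m. \<bar>\<alpha> n m\<bar>) ` {..<M n})" by (rule amax)
      then show ?thesis by (rule order_trans[rotated]) simp
    qed
    have K0: "K \<ge> 0" unfolding K_def using z by simp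
    have "?P n \<le> measure_pmf.prob (multinomial_pmf n (M n) (p n)) {N \<in> space (measure_pmf (multinomial_pmf n (M n) (p n))). \<epsilon>\<^sup>2 \<le> (S N)\<^sup>2}"
    proof (rule measure_pmf.finite_measure_mono)
      show "{N. \<epsilon> < \<bar>\<Sum>m<M n. \<alpha> n m * (real (N m) * (real (N m) - 1) / (real n * (real n - 1) * (p n m)\<^sup>2) - 1)\<bar>}
        \<subseteq> {N \<in> space (measure_pmf (multinomial_pmf n (M n) (p n))). \<epsilon>\<^sup>2 \<le> (S N)\<^sup>2}"
      proof safe
        fix N assume h: "\<epsilon> < \<bar>\<Sum>m<M n. \<alpha> n m * (real (N m) * (real (N m) - 1) / (real n * (real n - 1) * (p n m)\<^sup>2) - 1)\<bar>"
        then have "\<epsilon>\<^sup>2 \<le> \<bar>S N\<bar>\<^sup>2" unfolding S_def using \<epsilon> by (intro power_mono) auto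
        then show "\<epsilon>\<^sup>2 \<le> (S N)\<^sup>2" by simp
      qed simp
    qed simp
    also have "\<dots> \<le> integral\<^sup>L (multinomial_pmf n (M n) (p n)) (\<lambda>N. (S N)\<^sup>2) / \<epsilon>\<^sup>2"
      by (rule integral_Markov_inequality_measure) (use \<epsilon> integrable_measure_pmf_finite[OF fin] in auto)
    also have "\<dots> \<le> u n"
    proof -
      have "integral\<^sup>L (multinomial_pmf n (M n) (p n)) (\<lambda>N. (S N)\<^sup>2) \<le> (\<Sum>m<M n. (\<alpha> n m)\<^sup>2 * d m)"
        unfolding E using r0 by (simp add: mult_nonpos_nonneg)
      also have "\<dots> \<le> (\<Sum>m<M n. (Max ((\<lambda>m. \<bar>\<alpha> n m\<bar>) ` {..<M n}) * K) * \<bar>\<alpha> n m\<bar>)"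
      proof (intro sum_mono)
        fix m assume "m \<in> {..<M n}"
        then have m: "m < M n" by simp
        have "(\<alpha> n m)\<^sup>2 * d m \<le> (\<alpha> n m)\<^sup>2 * K" using dK[OF m] by (intro mult_left_mono) auto
        also have "\<dots> = (\<bar>\<alpha> n m\<bar> * K) * \<bar>\<alpha> n m\<bar>" by (simp add: power2_eq_square)
        also have "\<dots> \<le> (Max ((\<lambda>m. \<bar>\<alpha> n m\<bar>) ` {..<M n}) * K) * \<bar>\<alpha> n m\<bar>"
          using amax[OF m] K0 by (intro mult_right_mono) auto
        finally show "(\<alpha> n m)\<^sup>2 * d m \<le> (Max ((\<lambda>m. \<bar>\<alpha> n m\<bar>) ` {..<M n}) * K) * \<bar>\<alpha> n m\<bar>" .
      qed
      also have "\<dots> = (Max ((\<lambda>m. \<bar>\<alpha> n m\<bar>) ` {..<M n}) * K) * (\<Sum>m<M n. \<bar>\<alpha> n m\<bar>)"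
        by (simp add: sum_distrib_left)
      also have "\<dots> \<le> (Max ((\<lambda>m. \<bar>\<alpha> n m\<bar>) ` {..<M n}) * K) * B"
        using hB amax0 K0 by (intro mult_left_mono) auto
      finally have "integral\<^sup>L (multinomial_pmf n (M n) (p n)) (\<lambda>N. (S N)\<^sup>2) \<le> Max ((\<lambda>m. \<bar>\<alpha> n m\<bar>) ` {..<M n}) * K * B" .
      then have "integral\<^sup>L (multinomial_pmf n (M n) (p n)) (\<lambda>N. (S N)\<^sup>2) / \<epsilon>\<^sup>2 \<le> Max ((\<lambda>m. \<bar>\<alpha> n m\<bar>) ` {..<M n}) * K * B / \<epsilon>\<^sup>2"
        by (intro divide_right_mono) auto
      then show ?thesis unfolding u_def by simp
    qed
    finally show "?P n \<le> u n" .
  qed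
  moreover have "eventually (\<lambda>n. 0 \<le> ?P n) sequentially" by simp
  ultimately show "?P \<longlonglongrightarrow> 0"
    by (intro tendsto_sandwich[OF _ _ tendsto_const u0]) auto
qed

end
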